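(* Fix a sensor index $k$, integers $N\ge1$, $B_k\ge1$, $\Delta^{\max}\ge2$, probabilities $p_{k,1},\dots,p_{k,N}\in[0,1]$, $\lambda_k\in[0,1]$, and any $\mu\ge0$. Let $\mathcal{S}_k=\{0,\dots,N\}\times\{0,\dots,B_k\}\times\{1,\dots,\Delta^{\max}\}$, $\mathcal{A}_k=\{0,1\}$, $c_k(s,a)=r\min\{(1-a\mathbf{1}\{b\ge1\})\Delta+1,\Delta^{\max}\}$ for $s=(r,b,\Delta)$, and let $\Pr(s'\mid s,a)$ be the transition probabilities defined as follows for $s'=(r',b',\Delta')$: $r'$ is distributed as $\sum_{n=1}^N X_n$ with independent $X_n\sim$ Bernoulli$(p_{k,n})$, independently of everything else; $b'=\min\{b+e-a\mathbf{1}\{b\ge1\},B_k\}$ with $e\sim$ Bernoulli$(\lambda_k)$ independent; $\Delta'=\min\{(1-a\mathbf{1}\{b\ge1\})\Delta+1,\Delta^{\max}\}$. Fix $s_{\mathrm{ref}}\in\mathcal{S}_k$, set $V^{(0)}\equiv0$, $h^{(0)}\equiv0$, and for $i\ge0$ let $V^{(i+1)}(s)=\min_{a\in\mathcal{A}_k}\big[c_k(s,a)+\mu a+\sum_{s'}\Pr(s'\mid s,a)h^{(i)}(s')\big]$, $h^{(i+1)}(s)=V^{(i+1)}(s)-V^{(i+1)}(s_{\mathrm{ref}})$; let $V=\lim_i V^{(i)}$, $h(s)=V(s)-V(s_{\mathrm{ref}})$, and $Q(s,a)=c_k(s,a)+\mu a+\sum_{s'\in\mathcal{S}_k}\Pr(s'\mid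 s,a)h(s')$. Let $\pi$ be a policy obtained from this procedure, i.e. $\pi(s)\in\arg\min_{a\in\mathcal{A}_k}Q(s,a)$ for all $s$. Then $\pi$ has a threshold structure with respect to the AoI: if the action $1$ is optimal in state $s=(r,b,\Delta)$ (i.e. $\pi(s)=1$), then for every state $\bar s=(r,b,\bar\Delta)\in\mathcal{S}_k$ with $\bar\Delta\ge\Delta$ the action $1$ is also optimal, i.e. $Q(\bar s,1)\le Q(\bar s,0)$.
   Context: The limit $V$ of the relative value iteration is assumed to exist. *)

theory Defs
  imports "HOL-Analysis.Analysis"
begin

type_synonym state = "nat \<times> nat \<times> nat"  (* (r, b, Delta) *)

definition states :: "nat \<Rightarrow> nat \<Rightarrow> nat \<Rightarrow> state set" where
  "states N B Dmax = {0..N} \<times> {0..B} \<times> {1..Dmax}"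

definition acts :: "nat set" where
  "acts = {0, 1}"

definition ind_pos :: "nat \<Rightarrow> nat" where
  "ind_pos b = (if b \<ge> 1 then 1 else 0)"

definition next_aoi :: "nat \<Rightarrow> state \<Rightarrow> nat \<Rightarrow> nat" where
  "next_aoi Dmax s a = (case s of (r, b, d) \<Rightarrow> min ((1 - a * ind_pos b) * d + 1) Dmax)"

definition cost :: "nat \<Rightarrow> state \<Rightarrow> nat \<Rightarrow> real" where
  "cost Dmax s a = (case s of (r, b, d) \<Rightarrow> real r * real (next_aoi Dmax s a))"

(* Poisson-binomial pmf: probability that sum of independent Bernoulli(p n), n = 1..N, equals j *)
definition prob_r :: "nat \<Rightarrow> (nat \<Rightarrow> real) \<Rightarrow> nat \<Rightarrow> real" where
  "prob_r N p j = (\<Sum>T\<in>{T. T \<subseteq> {1..N} \<and> card T = j}.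
      (\<Prod>n\<in>T. p n) * (\<Prod>n\<in>{1..N} - T. 1 - p n))"

definition prob_b :: "nat \<Rightarrow> real \<Rightarrow> nat \<Rightarrow> nat \<Rightarrow> nat \<Rightarrow> real" where
  "prob_b B lam b a b' = (\<Sum>e\<in>{0::nat, 1}. (if e = 1 then lam else 1 - lam) *
      (if b' = min (b + e - a * ind_pos b) B then 1 else 0))"

definition trans :: "nat \<Rightarrow> nat \<Rightarrow> nat \<Rightarrow> (nat \<Rightarrow> real) \<Rightarrow> real \<Rightarrow> state \<Rightarrow> nat \<Rightarrow> state \<Rightarrow> real" where
  "trans N B Dmax p lam s a s' = (case s of (r, b, d) \<Rightarrow> case s' of (r', b', d') \<Rightarrow>
      prob_r N p r' * prob_b B lam b a b' * (if d' = next_aoi Dmax s a then 1 else 0))"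

fun rvi :: "nat \<Rightarrow> nat \<Rightarrow> nat \<Rightarrow> (nat \<Rightarrow> real) \<Rightarrow> real \<Rightarrow> real \<Rightarrow> state \<Rightarrow> nat
            \<Rightarrow> (state \<Rightarrow> real) \<times> (state \<Rightarrow> real)" where
  "rvi N B Dmax p lam \<mu> sref 0 = (\<lambda>_. 0, \<lambda>_. 0)"
| "rvi N B Dmax p lam \<mu> sref (Suc i) =
     (let h = snd (rvi N B Dmax p lam \<mu> sref i);
          V = (\<lambda>s. Min ((\<lambda>a. cost Dmax s a + \<mu> * real a +
                   (\<Sum>s'\<in>states N B Dmax. trans N B Dmax p lam s a s' * h s')) ` acts))
      in (V, \<lambda>s. V s - V sref))"

definition Qfun :: "nat \<Rightarrow> nat \<Rightarrow> nat \<Rightarrow> (nat \<Rightarrow> real) \<Rightarrow> real \<Rightarrow> real \<Rightarrow> state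
                    \<Rightarrow> (state \<Rightarrow> real) \<Rightarrow> state \<Rightarrow> nat \<Rightarrow> real" where
  "Qfun N B Dmax p lam \<mu> sref V s a = cost Dmax s a + \<mu> * real a +
      (\<Sum>s'\<in>states N B Dmax. trans N B Dmax p lam s a s' * (V s' - V sref))"

end

theory Submission
  imports Defs
begin

definition QG :: "nat \<Rightarrow> nat \<Rightarrow> nat \<Rightarrow> (nat \<Rightarrow> real) \<Rightarrow> real \<Rightarrow> real \<Rightarrow> (state \<Rightarrow> real) \<Rightarrow> state \<Rightarrow> nat \<Rightarrow> real" where
  "QG N B Dmax p lam \<mu> g s a = cost Dmax s a + \<mu> * real a +
      (\<Sum>s'\<in>states N B Dmax. trans N B Dmax p lam s a s' * g s')"

definition mono_d :: "nat \<Rightarrow> nat \<Rightarrow> nat \<Rightarrow> (state \<Rightarrow> real) \<Rightarrow> bool" where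
  "mono_d N B Dmax g = (\<forall>r b d1 d2. (r,b,d1) \<in> states N B Dmax \<longrightarrow> (r,b,d2) \<in> states N B Dmax
       \<longrightarrow> d1 \<le> d2 \<longrightarrow> g (r,b,d1) \<le> g (r,b,d2))"

lemma prob_r_nonneg:
  assumes "\<forall>n\<in>{1..N}. 0 \<le> p n \<and> p n \<le> 1"
  shows "0 \<le> prob_r N p j"
  unfolding prob_r_def
proof (rule sum_nonneg)
  fix T assume "T \<in> {T. T \<subseteq> {1..N} \<and> card T = j}"
  hence T: "T \<subseteq> {1..N}" by auto
  have "0 \<le> (\<Prod>n\<in>T. p n)" using T assms by (intro prod_nonneg) auto
  moreover have "0 \<le> (\<Prod>n\<in>{1..N} - T. 1 - p n)" using assms by (intro prod_nonneg) auto
  ultimately show "0 \<le> (\<Prod>n\<in>T. p n) * (\<Prod>n\<in>{1..N} - T. 1 - p n)" by simp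
qed

lemma prob_b_nonneg:
  assumes "0 \<le> lam" "lam \<le> 1"
  shows "0 \<le> prob_b B lam b a b'"
  unfolding prob_b_def using assms by (intro sum_nonneg) auto

lemma next_aoi_range:
  assumes "Dmax \<ge> 1"
  shows "1 \<le> next_aoi Dmax s a \<and> next_aoi Dmax s a \<le> Dmax"
  using assms by (auto simp: next_aoi_def split: prod.splits)

lemma next_aoi_mono:
  assumes "d1 \<le> d2"
  shows "next_aoi Dmax (r,b,d1) a \<le> next_aoi Dmax (r,b,d2) a"
proof -
  have "(1 - a * ind_pos b) * d1 \<le> (1 - a * ind_pos b) * d2" using assms by (rule mult_le_mono2)
  then have "(1 - a * ind_pos b) * d1 + 1 \<le> (1 - a * ind_pos b) * d2 + 1" by simp
  then show ?thesis unfolding next_aoi_def prod.case by (rule min.mono) simp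
qed

lemma sum_trans:
  assumes "Dmax \<ge> 1"
  shows "(\<Sum>s'\<in>states N B Dmax. trans N B Dmax p lam (r,b,d) a s' * g s') =
    (\<Sum>r'\<in>{0..N}. \<Sum>b'\<in>{0..B}. prob_r N p r' * prob_b B lam b a b' * g (r', b', next_aoi Dmax (r,b,d) a))"
proof -
  let ?D = "next_aoi Dmax (r,b,d) a"
  have D: "?D \<in> {1..Dmax}" using next_aoi_range[OF assms] by auto
  have "(\<Sum>s'\<in>states N B Dmax. trans N B Dmax p lam (r,b,d) a s' * g s') =
     (\<Sum>r'\<in>{0..N}. \<Sum>bd\<in>{0..B} \<times> {1..Dmax}. trans N B Dmax p lam (r,b,d) a (r', bd) * g (r', bd))"
    unfolding states_def by (subst sum.cartesian_product) (simp add: case_prod_beta)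
  also have "\<dots> = (\<Sum>r'\<in>{0..N}. \<Sum>b'\<in>{0..B}. \<Sum>d'\<in>{1..Dmax}. trans N B Dmax p lam (r,b,d) a (r', b', d') * g (r', b', d'))"
    by (intro sum.cong refl) (subst sum.cartesian_product, simp add: case_prod_beta)
  also have "\<dots> = (\<Sum>r'\<in>{0..N}. \<Sum>b'\<in>{0..B}. prob_r N p r' * prob_b B lam b a b' * g (r', b', ?D))"
  proof (intro sum.cong refl)
    fix r' b'
    have "(\<Sum>d'\<in>{1..Dmax}. trans N B Dmax p lam (r,b,d) a (r', b', d') * g (r', b', d'))
        = (\<Sum>d'\<in>{1..Dmax}. if d' = ?D then prob_r N p r' * prob_b B lam b a b' * g (r', b', d') else 0)"
      by (intro sum.cong refl) (simp add: trans_def)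
    also have "\<dots> = prob_r N p r' * prob_b B lam b a b' * g (r', b', ?D)"
      using D by (subst sum.delta) auto
    finally show "(\<Sum>d'\<in>{1..Dmax}. trans N B Dmax p lam (r,b,d) a (r', b', d') * g (r', b', d'))
        = prob_r N p r' * prob_b B lam b a b' * g (r', b', ?D)" .
  qed
  finally show ?thesis .
qed

lemma QG_mono:
  assumes "Dmax \<ge> 1" "\<forall>n\<in>{1..N}. 0 \<le> p n \<and> p n \<le> 1" "0 \<le> lam" "lam \<le> 1"
    and "mono_d N B Dmax g" and "d1 \<le> d2"
  shows "QG N B Dmax p lam \<mu> g (r,b,d1) a \<le> QG N B Dmax p lam \<mu> g (r,b,d2) a"
proof -
  let ?D1 = "next_aoi Dmax (r,b,d1) a" and ?D2 = "next_aoi Dmax (r,b,d2) a"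
  have D: "?D1 \<le> ?D2" using next_aoi_mono[OF assms(6)] .
  have r1: "1 \<le> ?D1 \<and> ?D1 \<le> Dmax" "1 \<le> ?D2 \<and> ?D2 \<le> Dmax" using next_aoi_range[OF assms(1)] by auto
  have c: "cost Dmax (r,b,d1) a \<le> cost Dmax (r,b,d2) a"
    using D by (simp add: cost_def mult_left_mono)
  have s: "(\<Sum>r'\<in>{0..N}. \<Sum>b'\<in>{0..B}. prob_r N p r' * prob_b B lam b a b' * g (r', b', ?D1))
     \<le> (\<Sum>r'\<in>{0..N}. \<Sum>b'\<in>{0..B}. prob_r N p r' * prob_b B lam b a b' * g (r', b', ?D2))"
  proof (intro sum_mono)
    fix r' b' assume "r' \<in> {0..N}" "b' \<in> {0..B}"
    hence "g (r', b', ?D1) \<le> g (r', b', ?D2)"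
      using assms(5) D r1 unfolding mono_d_def states_def by auto
    moreover have "0 \<le> prob_r N p r' * prob_b B lam b a b'"
      using prob_r_nonneg[OF assms(2)] prob_b_nonneg[OF assms(3,4)] by simp
    ultimately show "prob_r N p r' * prob_b B lam b a b' * g (r', b', ?D1)
       \<le> prob_r N p r' * prob_b B lam b a b' * g (r', b', ?D2)"
      by (simp add: mult_left_mono)
  qed
  show ?thesis unfolding QG_def sum_trans[OF assms(1)] using c s by simp
qed

lemma rvi_mono:
  assumes "Dmax \<ge> 1" "\<forall>n\<in>{1..N}. 0 \<le> p n \<and> p n \<le> 1" "0 \<le> lam" "lam \<le> 1"
  shows "mono_d N B Dmax (fst (rvi N B Dmax p lam \<mu> sref i)) \<and>
         mono_d N B Dmax (snd (rvi N B Dmax p lam \<mu> sref i))"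
proof (induction i)
  case 0
  then show ?case by (simp add: mono_d_def)
next
  case (Suc i)
  let ?h = "snd (rvi N B Dmax p lam \<mu> sref i)"
  have eq: "fst (rvi N B Dmax p lam \<mu> sref (Suc i)) =
      (\<lambda>s. min (QG N B Dmax p lam \<mu> ?h s 0) (QG N B Dmax p lam \<mu> ?h s 1))"
    by (rule ext) (simp add: Let_def acts_def QG_def)
  have m: "mono_d N B Dmax (fst (rvi N B Dmax p lam \<mu> sref (Suc i)))"
    unfolding eq mono_d_def
  proof (intro allI impI)
    fix r b d1 d2 assume h: "(r,b,d1) \<in> states N B Dmax" "(r,b,d2) \<in> states N B Dmax" "d1 \<le> d2"
    show "min (QG N B Dmax p lam \<mu> ?h (r,b,d1) 0) (QG N B Dmax p lam \<mu> ?h (r,b,d1) 1)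
       \<le> min (QG N B Dmax p lam \<mu> ?h (r,b,d2) 0) (QG N B Dmax p lam \<mu> ?h (r,b,d2) 1)"
      by (rule min.mono; rule QG_mono[OF assms]) (use Suc.IH h in auto)
  qed
  moreover have "snd (rvi N B Dmax p lam \<mu> sref (Suc i)) =
      (\<lambda>s. fst (rvi N B Dmax p lam \<mu> sref (Suc i)) s - fst (rvi N B Dmax p lam \<mu> sref (Suc i)) sref)"
    by (simp add: Let_def)
  ultimately show ?case unfolding mono_d_def by auto
qed

theorem theorem1:
  fixes N B Dmax :: nat and p :: "nat \<Rightarrow> real" and lam \<mu> :: real
    and sref :: state and V :: "state \<Rightarrow> real" and \<pi> :: "state \<Rightarrow> nat"
    and r b d d' :: nat
  assumes "N \<ge> 1" and "B \<ge> 1" and "Dmax \<ge> 2"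
    and "\<forall>n\<in>{1..N}. 0 \<le> p n \<and> p n \<le> 1"
    and "0 \<le> lam" and "lam \<le> 1" and "\<mu> \<ge> 0"
    and "sref \<in> states N B Dmax"
    and "\<forall>s\<in>states N B Dmax. (\<lambda>i. fst (rvi N B Dmax p lam \<mu> sref i) s) \<longlonglongrightarrow> V s"
    and "\<forall>s\<in>states N B Dmax. \<pi> s \<in> acts \<and>
           (\<forall>a\<in>acts. Qfun N B Dmax p lam \<mu> sref V s (\<pi> s) \<le> Qfun N B Dmax p lam \<mu> sref V s a)"
    and "(r, b, d) \<in> states N B Dmax" and "\<pi> (r, b, d) = 1"
    and "(r, b, d') \<in> states N B Dmax" and "d \<le> d'"
  shows "Qfun N B Dmax p lam \<mu> sref V (r, b, d') 1 \<le> Qfun N B Dmax p lam \<mu> sref V (r, b, d') 0"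
proof -
  have D1: "Dmax \<ge> 1" using assms(3) by simp
  let ?g = "\<lambda>s'. V s' - V sref"
  have Qeq: "Qfun N B Dmax p lam \<mu> sref V s a = QG N B Dmax p lam \<mu> ?g s a" for s a
    by (simp add: Qfun_def QG_def)
  have monoV: "mono_d N B Dmax V"
    unfolding mono_d_def
  proof (intro allI impI)
    fix r b d1 d2 assume h: "(r,b,d1) \<in> states N B Dmax" "(r,b,d2) \<in> states N B Dmax" "d1 \<le> d2"
    have "\<forall>i. fst (rvi N B Dmax p lam \<mu> sref i) (r,b,d1) \<le> fst (rvi N B Dmax p lam \<mu> sref i) (r,b,d2)"
      using rvi_mono[OF D1 assms(4,5,6)] h unfolding mono_d_def by blast
    then show "V (r,b,d1) \<le> V (r,b,d2)"
      using assms(9) h by (intro LIMSEQ_le[where X="\<lambda>i. fst (rvi N B Dmax p lam \<mu> sref i) (r,b,d1)"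
            and Y="\<lambda>i. fst (rvi N B Dmax p lam \<mu> sref i) (r,b,d2)"]) auto
  qed
  have monog: "mono_d N B Dmax ?g" using monoV unfolding mono_d_def by auto
  have opt: "QG N B Dmax p lam \<mu> ?g (r,b,d) 1 \<le> QG N B Dmax p lam \<mu> ?g (r,b,d) 0"
    using assms(10,11,12) unfolding Qeq acts_def by force
  have m0: "QG N B Dmax p lam \<mu> ?g (r,b,d) 0 \<le> QG N B Dmax p lam \<mu> ?g (r,b,d') 0"
    using QG_mono[OF D1 assms(4,5,6) monog assms(14)] .
  show ?thesis
  proof (cases "b \<ge> 1")
    case True
    have "QG N B Dmax p lam \<mu> ?g (r,b,d') 1 = QG N B Dmax p lam \<mu> ?g (r,b,d) 1"
      unfolding QG_def sum_trans[OF D1] using True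
      by (simp add: cost_def next_aoi_def ind_pos_def)
    then show ?thesis unfolding Qeq using opt m0 by simp
  next
    case False
    hence b0: "b = 0" by simp
    have eq: "QG N B Dmax p lam \<mu> ?g (r,b,x) 1 = QG N B Dmax p lam \<mu> ?g (r,b,x) 0 + \<mu>" for x
      unfolding QG_def sum_trans[OF D1] using b0
      by (simp add: cost_def next_aoi_def ind_pos_def prob_b_def)
    have "\<mu> = 0" using opt eq[of d] assms(7) by simp
    then show ?thesis unfolding Qeq using eq[of d'] by simp
  qed
qed

end
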